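(* Let $\gamma>1$. Among functions $\chi(\pi)=\dfrac{\pi^2+c_1\pi+c_2}{c_3\pi+c_4}$ ($c_3\neq0$) satisfying $\chi(0)=0$, $\chi(1/3)=1/3$, $\chi'(0)=\gamma$, $\chi'(1/3)=1/2$, one has $$\chi(\pi)=\frac{\pi[\gamma+3\pi(\gamma-2)]}{1+3\pi(2\gamma-3)}.$$ For this $\chi$, the compressibility inequalities $0<\chi<1$, $\zeta(\pi)>0$, $\eta(\pi)>0$ hold for all $\pi\in(0,1/3)$; the function $e$ with $e'/e=\pi/((\chi-\pi)(\pi+1))$, $e(0)=1$, is $$e(\pi)=\frac{(1+\pi)^{\frac{5-3\gamma}{2(\gamma-1)}}}{\sqrt{1-3\pi}},\qquad\text{so } e^2(\pi)(1-3\pi)=(1+\pi)^{\frac{5-3\gamma}{\gamma-1}};$$ and the Taub inequality $e^2(\pi)(1-3\pi)\ge1$ holds for all $\pi\in(0,1/3)$ if and only if $1<\gamma\le5/3$.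
   Context: $\zeta(\pi)\equiv(1+\pi)(\chi-\pi)\chi'+2\chi(1-\chi)$, $\eta(\pi)\equiv(2\pi+1)\chi-\pi$. The variable $\pi=p/\rho\in(0,1/3)$, $\chi$ is the squared speed of sound of a generic ideal gas, $e=\rho/n$ its specific energy. *)

theory Defs
  imports "HOL-Analysis.Analysis"
begin

text \<open>zeta and eta for a given squared sound speed chi (as function of pi = p/rho).\<close>
definition zeta :: "(real \<Rightarrow> real) \<Rightarrow> real \<Rightarrow> real" where
  "zeta chi p = (1 + p) * (chi p - p) * deriv chi p + 2 * chi p * (1 - chi p)"

definition eta :: "(real \<Rightarrow> real) \<Rightarrow> real \<Rightarrow> real" where
  "eta chi p = (2 * p + 1) * chi p - p"

definition chi_ansatz :: "real \<Rightarrow> real \<Rightarrow> real \<Rightarrow> real \<Rightarrow> real \<Rightarrow> real" where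
  "chi_ansatz c1 c2 c3 c4 p = (p^2 + c1 * p + c2) / (c3 * p + c4)"

definition chi_gamma :: "real \<Rightarrow> real \<Rightarrow> real" where
  "chi_gamma g p = p * (g + 3 * p * (g - 2)) / (1 + 3 * p * (2 * g - 3))"

definition e_gamma :: "real \<Rightarrow> real \<Rightarrow> real" where
  "e_gamma g p = (1 + p) powr ((5 - 3 * g) / (2 * (g - 1))) / sqrt (1 - 3 * p)"

end

theory Submission
  imports Defs
begin

lemma ansatz_deriv:
  assumes "c3*x+c4 \<noteq> 0"
  shows "(chi_ansatz c1 c2 c3 c4 has_real_derivative
     (((2*x+c1)*(c3*x+c4) - (x^2+c1*x+c2)*c3)/(c3*x+c4)^2)) (at x)"
proof -
  have n: "((\<lambda>x. x^2 + c1*x + c2) has_real_derivative (2*x+c1)) (at x)"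
    by (rule derivative_eq_intros refl | simp)+
  have d: "((\<lambda>x. c3*x + c4) has_real_derivative c3) (at x)"
    by (rule derivative_eq_intros refl | simp)+
  show ?thesis using DERIV_divide[OF n d assms]
    unfolding chi_ansatz_def[abs_def] by (simp add: power2_eq_square)
qed

lemma den_pos: "g > 1 \<Longrightarrow> 0 < p \<Longrightarrow> p < 1/3 \<Longrightarrow> 1 + 3*p*(2*g-3) > (0::real)"
proof -
  assume a: "g > 1" "0 < p" "p < 1/3"
  have "1 + 3*p*(2*g-3) = (1 - 3*p) + 6*(p*(g-1))" by (simp add: algebra_simps)
  also have "\<dots> > 0" using a by (intro add_pos_pos mult_pos_pos) auto
  finally show ?thesis .
qed

lemma chi_deriv:
  assumes "1 + 3*p*(2*g-3) \<noteq> (0::real)"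
  shows "(chi_gamma g has_real_derivative
     ((g + 6*(g-2)*p + 9*(g-2)*(2*g-3)*p^2)/(1 + 3*p*(2*g-3))^2)) (at p)"
proof -
  have n: "((\<lambda>p. p * (g + 3 * p * (g - 2))) has_real_derivative (g + 6*(g-2)*p)) (at p)"
    by (rule derivative_eq_intros refl | simp add: algebra_simps)+
  have d: "((\<lambda>p. 1 + 3 * p * (2 * g - 3)) has_real_derivative (3*(2*g-3))) (at p)"
    by (rule derivative_eq_intros refl | simp add: algebra_simps)+
  have D: "(chi_gamma g has_real_derivative
     ((g + 6*(g-2)*p) * (1 + 3 * p * (2 * g - 3)) - (p * (g + 3 * p * (g - 2))) * (3*(2*g-3)))
       / ((1 + 3 * p * (2 * g - 3)) * (1 + 3 * p * (2 * g - 3)))) (at p)"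
    unfolding chi_gamma_def[abs_def] by (rule DERIV_divide[OF n d assms])
  have e1: "(g + 6*(g-2)*p) * (1 + 3 * p * (2 * g - 3)) - (p * (g + 3 * p * (g - 2))) * (3*(2*g-3))
     = g + 6*(g-2)*p + 9*(g-2)*(2*g-3)*p^2" by (simp add: algebra_simps power2_eq_square)
  show ?thesis using D unfolding e1 by (simp add: power2_eq_square)
qed

lemma d1: "-1 < p \<Longrightarrow> ((\<lambda>p. (1+p) powr a) has_real_derivative a*(1+p) powr (a-1)) (at (p::real))"
  by (rule derivative_eq_intros refl | simp)+

lemma d2: "p < 1/3 \<Longrightarrow> ((\<lambda>p. sqrt (1-3*p)) has_real_derivative -3/(2 * sqrt(1-3*p))) (at (p::real))"
  by (rule derivative_eq_intros refl | simp add: divide_simps)+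

lemma chi_minus: "g > 1 \<Longrightarrow> 0 < p \<Longrightarrow> p < 1/3 \<Longrightarrow>
   chi_gamma g p - p = p*(g-1)*(1-3*p)/(1 + 3*p*(2*g-3))"
  using den_pos[of g p] unfolding chi_gamma_def by (simp add: field_simps)

lemma e_has_deriv:
  assumes hg: "g > 1" and p: "0 < p" "p < 1/3"
  shows "(e_gamma g has_real_derivative e_gamma g p * (p / ((chi_gamma g p - p)*(p+1)))) (at p)"
proof -
  define a where "a = (5 - 3 * g) / (2 * (g - 1))"
  define u where "u = (1+p) powr a"
  define s where "s = sqrt (1-3*p)"
  have u: "u > 0" unfolding u_def using p by simp
  have s: "s > 0" unfolding s_def using p by simp
  have ss: "s * s = 1-3*p" unfolding s_def using p by simp
  have ua: "(1+p) powr (a-1) = u/(1+p)" unfolding u_def using p by (simp add: powr_diff)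
  have eg: "e_gamma g = (\<lambda>p. (1+p) powr a / sqrt (1-3*p))"
    unfolding e_gamma_def a_def by (rule ext) simp
  have D: "(e_gamma g has_real_derivative (a*(1+p) powr (a-1) * s - u * (-3/(2 * s)))/(s * s)) (at p)"
    unfolding eg u_def s_def
    by (rule DERIV_divide[OF d1 d2]) (use p in auto)
  have den: "1 + 3*p*(2*g-3) > 0" using den_pos hg p by blast
  have e: "e_gamma g p = u / s" by (simp add: e_gamma_def u_def s_def a_def)
  have st1: "(a*(1+p) powr (a-1) * s - u * (-3/(2 * s)))/(s * s) = (u/s)*(a/(1+p) + 3/(2*(1-3*p)))"
    unfolding ua ss[symmetric] using u s p by (simp add: field_simps)
  have nz: "g - 1 \<noteq> 0" "1 + p \<noteq> 0" "1 - 3*p \<noteq> 0" "1 + 3*p*(2*g-3) \<noteq> 0" "p \<noteq> 0"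
    using hg p den by auto
  have st2a: "a/(1+p) + 3/(2*(1-3*p)) = (1 + 3*p*(2*g-3)) / ((g-1)*(1-3*p)*(1+p))"
  proof -
    have y: "2*(g-1)*(1+p) \<noteq> 0" "2*(1-3*p) \<noteq> 0" "(g-1)*(1-3*p)*(1+p) \<noteq> 0" using nz by auto
    have "a/(1+p) = (5-3*g)/(2*(g-1)*(1+p))" unfolding a_def by simp
    hence "a/(1+p) + 3/(2*(1-3*p)) = ((5-3*g)*(2*(1-3*p)) + 3*(2*(g-1)*(1+p)))/((2*(g-1)*(1+p))*(2*(1-3*p)))"
      using add_frac_eq[OF y(1,2)] by simp
    also have "\<dots> = (1 + 3*p*(2*g-3)) / ((g-1)*(1-3*p)*(1+p))"
      by (subst frac_eq_eq) (use y in \<open>auto simp: algebra_simps\<close>)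
    finally show ?thesis .
  qed
  have st2b: "p / ((chi_gamma g p - p)*(p+1)) = (1 + 3*p*(2*g-3)) / ((g-1)*(1-3*p)*(1+p))"
  proof -
    have "(chi_gamma g p - p)*(p+1) = p * ((g-1)*(1-3*p)*(1+p)) / (1 + 3*p*(2*g-3))"
      unfolding chi_minus[OF hg p] by (simp add: algebra_simps)
    hence "p / ((chi_gamma g p - p)*(p+1)) = (p * (1 + 3*p*(2*g-3))) / (p * ((g-1)*(1-3*p)*(1+p)))"
      by (simp add: divide_divide_eq_right)
    also have "\<dots> = (1 + 3*p*(2*g-3)) / ((g-1)*(1-3*p)*(1+p))"
      using nz(5) by (rule mult_divide_mult_cancel_left)
    finally show ?thesis .
  qed
  have st2: "a/(1+p) + 3/(2*(1-3*p)) = p / ((chi_gamma g p - p)*(p+1))"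
    using st2a st2b by simp
  have "(a*(1+p) powr (a-1) * s - u * (-3/(2 * s)))/(s * s) = e_gamma g p * (p / ((chi_gamma g p - p)*(p+1)))"
    using st1 st2 e by simp
  then show ?thesis using D by simp
qed

lemma part1:
  assumes hg: "g > 1" and c3: "c3 \<noteq> 0" and c4: "c4 \<noteq> 0" and d: "c3 * (1/3) + c4 \<noteq> 0"
   and h0: "chi_ansatz c1 c2 c3 c4 0 = 0"
   and h1: "chi_ansatz c1 c2 c3 c4 (1/3) = 1/3"
   and hd0: "(chi_ansatz c1 c2 c3 c4 has_real_derivative g) (at 0)"
   and hd1: "(chi_ansatz c1 c2 c3 c4 has_real_derivative 1/2) (at (1/3))"
   and pp: "c3 * p + c4 \<noteq> 0"
  shows "chi_ansatz c1 c2 c3 c4 p = chi_gamma g p"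
proof -
  have c2: "c2 = 0" using h0 c4 by (simp add: chi_ansatz_def)
  have E1: "1 + 3*c1 = c3 + 3*c4" using h1 d c2 by (simp add: chi_ansatz_def field_simps)
  have "g = ((2*0+c1)*(c3*0+c4) - (0^2+c1*0+c2)*c3)/(c3*0+c4)^2"
    using DERIV_unique[OF hd0 ansatz_deriv] c4 by simp
  hence E2: "c1 = g*c4" using c4 c2 by (simp add: field_simps power2_eq_square)
  define D where "D = c3 * (1/3) + c4"
  have "1/2 = ((2*(1/3)+c1)*(c3*(1/3)+c4) - ((1/3)^2+c1*(1/3)+c2)*c3)/(c3*(1/3)+c4)^2"
    using DERIV_unique[OF hd1 ansatz_deriv[OF d]] .
  hence "1/2 * D^2 = (2*(1/3)+c1)*D - ((1/3)^2+c1*(1/3)+c2)*c3"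
    using d unfolding D_def by (simp add: eq_divide_eq)
  also have "((1/3)^2+c1*(1/3)+c2) = D/3" unfolding D_def using E1 c2 by (simp add: power2_eq_square algebra_simps)
  finally have "D * (D/2) = D * (2/3 + c1 - c3/3)" by (simp add: algebra_simps power2_eq_square)
  hence "D/2 = 2/3 + c1 - c3/3" using d unfolding D_def by simp
  hence E3: "4/3 + 2*c1 = c3 + c4" unfolding D_def by (simp add: field_simps)
  have F1: "3*c4*(g-2) = 1" using E1 E2 E3 by (simp add: algebra_simps)
  have F2: "c3 = 3*c4*(2*g-3)" using E1 E2 F1 by (simp add: algebra_simps)
  have eq: "c3*p+c4 = c4*(1 + 3*p*(2*g-3))" unfolding F2 by (simp add: algebra_simps)
  have dn: "1 + 3*p*(2*g-3) \<noteq> 0" using pp eq by auto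
  have num: "p^2 + g*c4*p + 0 = c4 * (p * (g + 3 * p * (g - 2)))"
  proof -
    have "c4 * (p * (g + 3 * p * (g - 2))) = g*c4*p + p^2 * (3*c4*(g-2))"
      by (simp add: algebra_simps power2_eq_square)
    then show ?thesis using F1 by simp
  qed
  show ?thesis unfolding chi_ansatz_def chi_gamma_def eq c2 E2 num
    using c4 by simp
qed

lemma part2:
  assumes hg: "g > 1" and p: "0 < p" "p < 1/3"
  shows "0 < chi_gamma g p \<and> chi_gamma g p < 1
          \<and> zeta (chi_gamma g) p > 0 \<and> eta (chi_gamma g) p > 0"
proof -
  define den where "den = 1 + 3*p*(2*g-3)"
  define N where "N = p*(g + 3*p*(g-2))"
  have den: "den > 0" unfolding den_def using den_pos hg p by blast
  have chi: "chi_gamma g p = N/den" unfolding chi_gamma_def N_def den_def by simp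
  have "g + 3*p*(g-2) = (g-1)*(1+3*p) + (1-3*p)" by (simp add: algebra_simps)
  also have "\<dots> > 0" using hg p by (intro add_pos_pos mult_pos_pos) auto
  finally have N: "N > 0" unfolding N_def using p by simp
  have "den - N = (g-1)*(p*(5-3*p)) + (1-3*p)*(1-p)" unfolding den_def N_def by (simp add: algebra_simps)
  also have "\<dots> > 0" using hg p by (intro add_pos_pos mult_pos_pos) auto
  finally have dN: "den - N > 0" .
  have c0: "0 < chi_gamma g p" using chi N den by simp
  have c1: "chi_gamma g p < 1" using chi dN den by simp
  have "(2*p+1)*N - p*den = p*((g-1)*(1-p+6*p^2) + 2*p*(1-3*p))" unfolding den_def N_def
    by (simp add: algebra_simps power2_eq_square)
  also have "\<dots> > 0" using hg p by (intro add_pos_pos mult_pos_pos) auto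
  finally have "(2*p+1)*N - p*den > 0" .
  hence et: "eta (chi_gamma g) p > 0" unfolding eta_def chi using den by (simp add: field_simps)
  define Q where "Q = g + 6*(g-2)*p + 9*(g-2)*(2*g-3)*p^2"
  have "Q = (1-3*p)^2 + (g-1)*((1-3*p)*(1+9*p)) + 18*(g-1)^2*p^2" unfolding Q_def
    by (simp add: algebra_simps power2_eq_square)
  also have "\<dots> > 0" using hg p by (intro add_pos_nonneg add_nonneg_pos mult_pos_pos) auto
  finally have Q: "Q > 0" .
  have dv: "deriv (chi_gamma g) p = Q/den^2"
    unfolding Q_def den_def by (rule DERIV_imp_deriv, rule chi_deriv) (use den den_def in auto)
  have "chi_gamma g p - p > 0" using chi_minus[OF hg p] hg p den unfolding den_def by simp
  hence "(1+p)*(chi_gamma g p - p)*deriv (chi_gamma g) p \<ge> 0" unfolding dv using Q p by simp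
  moreover have "2*chi_gamma g p*(1-chi_gamma g p) > 0" using c0 c1 by simp
  ultimately have z: "zeta (chi_gamma g) p > 0" unfolding zeta_def by linarith
  show ?thesis using c0 c1 z et by blast
qed

lemma e_pos: "0 \<le> p \<Longrightarrow> p < 1/3 \<Longrightarrow> e_gamma g p > 0"
  unfolding e_gamma_def by simp

lemma e_cont: "continuous_on {0..<1/3} (e_gamma g)"
  unfolding e_gamma_def[abs_def]
  by (intro continuous_intros) auto

lemma part3b:
  assumes hg: "g > 1" and e0: "e 0 = 1" and ce: "continuous_on {0..<1/3} e"
   and h: "\<forall>p\<in>{0<..<1/3}. e p \<noteq> 0 \<and> e differentiable (at p)
               \<and> deriv e p / e p = p / ((chi_gamma g p - p) * (p + 1))"
   and q: "q \<in> {0..<1/3}"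
  shows "e q = e_gamma g q"
proof (cases "q = 0")
  case True then show ?thesis using e0 by (simp add: e_gamma_def)
next
  case False
  hence q0: "0 < q" "q < 1/3" using q by auto
  define hh where "hh = (\<lambda>x. e x / e_gamma g x)"
  have "hh q = hh 0"
  proof (rule DERIV_isconst2[of 0 q])
    show "0 < q" by fact
    show "continuous_on {0..q} hh" unfolding hh_def
      using q0 by (intro continuous_on_divide continuous_on_subset[OF ce] continuous_on_subset[OF e_cont])
        (auto simp: e_pos less_imp_neq[symmetric] dest: e_pos[of _ g])
    fix x assume x: "0 < x" "x < q"
    hence x': "0 < x" "x < 1/3" using q0 by auto
    have hx: "e x \<noteq> 0" "e differentiable (at x)" "deriv e x / e x = x / ((chi_gamma g x - x) * (x + 1))"
      using h x' by auto
    have de: "(e has_real_derivative deriv e x) (at x)" using hx(2) DERIV_deriv_iff_real_differentiable by blast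
    have dd: "deriv e x = e x * (x / ((chi_gamma g x - x) * (x + 1)))" using hx(1,3) by (simp add: field_simps)
    have eg: "e_gamma g x > 0" using e_pos x' by simp
    have "(hh has_real_derivative (deriv e x * e_gamma g x - e x * (e_gamma g x * (x / ((chi_gamma g x - x)*(x+1)))))
       / (e_gamma g x * e_gamma g x)) (at x)"
      unfolding hh_def by (rule DERIV_divide[OF de e_has_deriv[OF hg x']]) (use eg in simp)
    then show "(hh has_real_derivative 0) (at x)" unfolding dd by (simp add: algebra_simps)
  qed (use q0 in auto)
  then show ?thesis unfolding hh_def using e0 e_pos[of q g] q0 by (simp add: e_gamma_def field_simps)
qed

theorem mainTheorem4:
  fixes g :: real
  assumes hg: "g > 1"
  shows
    \<comment> \<open>(1) the ansatz with the four conditions forces chi = chi_gamma\<close>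
    "(\<forall>c1 c2 c3 c4. c3 \<noteq> 0 \<and> c4 \<noteq> 0 \<and> c3 * (1/3) + c4 \<noteq> 0
        \<and> chi_ansatz c1 c2 c3 c4 0 = 0
        \<and> chi_ansatz c1 c2 c3 c4 (1/3) = 1/3
        \<and> (chi_ansatz c1 c2 c3 c4 has_real_derivative g) (at 0)
        \<and> (chi_ansatz c1 c2 c3 c4 has_real_derivative 1/2) (at (1/3))
      \<longrightarrow> (\<forall>p. c3 * p + c4 \<noteq> 0 \<longrightarrow> chi_ansatz c1 c2 c3 c4 p = chi_gamma g p))
    \<comment> \<open>(2) compressibility inequalities\<close>
    \<and> (\<forall>p\<in>{0<..<1/3}. 0 < chi_gamma g p \<and> chi_gamma g p < 1
          \<and> zeta (chi_gamma g) p > 0 \<and> eta (chi_gamma g) p > 0)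
    \<comment> \<open>(3a) e_gamma solves e'/e = pi/((chi-pi)(pi+1)), e(0)=1\<close>
    \<and> (e_gamma g 0 = 1 \<and> continuous_on {0..<1/3} (e_gamma g)
        \<and> (\<forall>p\<in>{0<..<1/3}. e_gamma g p \<noteq> 0 \<and> e_gamma g differentiable (at p)
             \<and> deriv (e_gamma g) p / e_gamma g p
                 = p / ((chi_gamma g p - p) * (p + 1))))
    \<comment> \<open>(3b) and it is the unique such function\<close>
    \<and> (\<forall>e. e 0 = 1 \<and> continuous_on {0..<1/3} e
          \<and> (\<forall>p\<in>{0<..<1/3}. e p \<noteq> 0 \<and> e differentiable (at p)
               \<and> deriv e p / e p = p / ((chi_gamma g p - p) * (p + 1)))
        \<longrightarrow> (\<forall>p\<in>{0..<1/3}. e p = e_gamma g p))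
    \<comment> \<open>(3c) e^2 (1 - 3 pi) = (1+pi)^((5-3g)/(g-1))\<close>
    \<and> (\<forall>p\<in>{0<..<1/3}. (e_gamma g p)^2 * (1 - 3 * p) = (1 + p) powr ((5 - 3 * g) / (g - 1)))
    \<comment> \<open>(4) Taub inequality iff g <= 5/3\<close>
    \<and> ((\<forall>p\<in>{0<..<1/3}. (e_gamma g p)^2 * (1 - 3 * p) \<ge> 1) \<longleftrightarrow> g \<le> 5/3)"
proof -
  have A: "\<forall>p\<in>{0<..<1/3}. (e_gamma g p)^2 * (1 - 3 * p) = (1 + p) powr ((5 - 3 * g) / (g - 1))"
  proof
    fix p :: real assume "p \<in> {0<..<1/3}"
    hence p: "0 < p" "p < 1/3" by auto
    define a where "a = (5 - 3 * g) / (2 * (g - 1))"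
    have sq: "(sqrt (1 - 3*p))^2 = 1 - 3*p" using p by simp
    have "(e_gamma g p)^2 * (1 - 3 * p) = ((1 + p) powr a)^2 / (sqrt (1 - 3*p))^2 * (1 - 3*p)"
      unfolding e_gamma_def a_def by (simp add: power_divide)
    also have "\<dots> = ((1 + p) powr a)^2" unfolding sq using p by simp
    also have "\<dots> = ((1 + p) powr a) powr (real 2)"
      using p by (subst powr_realpow) auto
    also have "\<dots> = (1 + p) powr ((5 - 3 * g) / (g - 1))"
    proof -
      have "(5 - 3 * g) / (2 * (g - 1)) * real 2 = (5 - 3 * g) / (g - 1)"
      proof -
        have gen: "x / (2 * y) * 2 = x / y" for x y :: real
          by (cases "y = 0") (simp_all add: field_simps)
        show ?thesis using gen[of "5 - 3 * g" "g - 1"] by (simp only: of_nat_numeral)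
      qed
      then show ?thesis unfolding powr_powr a_def by simp
    qed
    finally show "(e_gamma g p)^2 * (1 - 3 * p) = (1 + p) powr ((5 - 3 * g) / (g - 1))" .
  qed
  have B: "(\<forall>p\<in>{0<..<1/3}. (e_gamma g p)^2 * (1 - 3 * p) \<ge> 1) \<longleftrightarrow> g \<le> 5/3"
  proof
    assume H: "\<forall>p\<in>{0<..<1/3}. (e_gamma g p)^2 * (1 - 3 * p) \<ge> 1"
    show "g \<le> 5/3"
    proof (rule ccontr)
      assume "\<not> g \<le> 5/3"
      hence neg: "(5 - 3 * g) / (g - 1) < 0" using hg by (intro divide_neg_pos) auto
      have m: "(1/6::real) \<in> {0<..<1/3}" by simp
      have "(1 + 1/6::real) powr ((5 - 3 * g) / (g - 1)) < 1"
        by (rule powr_less_one) (use neg in auto)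
      moreover have "(1 + 1/6::real) powr ((5 - 3 * g) / (g - 1)) \<ge> 1"
        using bspec[OF H m] bspec[OF A m] by simp
      ultimately show False by simp
    qed
  next
    assume "g \<le> 5/3"
    hence nn: "(5 - 3 * g) / (g - 1) \<ge> 0" using hg by (intro divide_nonneg_pos) auto
    show "\<forall>p\<in>{0<..<1/3}. (e_gamma g p)^2 * (1 - 3 * p) \<ge> 1"
    proof
      fix p :: real assume pm: "p \<in> {0<..<1/3}"
      have "1 \<le> (1 + p) powr ((5 - 3 * g) / (g - 1))"
        by (rule ge_one_powr_ge_zero) (use pm nn in auto)
      then show "(e_gamma g p)^2 * (1 - 3 * p) \<ge> 1" using bspec[OF A pm] by simp
    qed
  qed
  have C: "e_gamma g 0 = 1 \<and> continuous_on {0..<1/3} (e_gamma g)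
        \<and> (\<forall>p\<in>{0<..<1/3}. e_gamma g p \<noteq> 0 \<and> e_gamma g differentiable (at p)
             \<and> deriv (e_gamma g) p / e_gamma g p
                 = p / ((chi_gamma g p - p) * (p + 1)))"
  proof (intro conjI ballI)
    show "e_gamma g 0 = 1" by (simp add: e_gamma_def)
    show "continuous_on {0..<1/3} (e_gamma g)" by (rule e_cont)
    fix p :: real assume "p \<in> {0<..<1/3}"
    hence p: "0 < p" "p < 1/3" by auto
    have ep: "e_gamma g p > 0" using e_pos p by simp
    thus "e_gamma g p \<noteq> 0" by simp
    show "e_gamma g differentiable (at p)"
      using e_has_deriv[OF hg p] real_differentiable_def by blast
    show "deriv (e_gamma g) p / e_gamma g p = p / ((chi_gamma g p - p) * (p + 1))"
      using DERIV_imp_deriv[OF e_has_deriv[OF hg p]] ep by simp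
  qed
  show ?thesis
    apply (rule conjI)
    subgoal using part1[OF hg] by blast
    apply (rule conjI)
    subgoal using part2[OF hg] by auto
    apply (rule conjI)
    subgoal using C by blast
    apply (rule conjI)
    subgoal using part3b[OF hg] by blast
    apply (rule conjI)
    subgoal using A by blast
    subgoal using B by blast
    done
qed

end
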